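(* Let $\mathcal{X}$ be a finite-dimensional complex Euclidean space, $\varepsilon\in[0,1]$, and let $\mathcal{P}=\{P_0^i\}_{i\in\Lambda},\ \mathcal{Q}=\{P_1^j\}_{j\in\Sigma}\subset\mathrm{Pos}(\mathcal{X})$ be finite sets. Consider the primal problem $\text{minimize } \gamma \text{ subject to } \langle X,P_0^i\rangle\ge 1-\varepsilon\ \forall i\in\Lambda,\ \langle X,P_1^j\rangle\le\gamma\ \forall j\in\Sigma,\ X\preceq\mathbb{1},\ \gamma\ge 0,\ X\in\mathrm{Pos}(\mathcal{X}),$ and the dual problem $\text{maximize } (1-\varepsilon)\|\mathbf{z}\|_1-\mathrm{Tr}(Z) \text{ subject to } \sum_{i\in\Lambda} z_iP_0^i-\sum_{j\in\Sigma}v_jP_1^j\preceq Z,\ \sum_{j\in\Sigma}v_j\le 1,\ v_j\ge 0\ \forall j,\ \mathbf{z}=(z_i)_{i\in\Lambda}\ge 0,\ Z\succeq 0,$ with $Z$ Hermitian on $\mathcal{X}$. Then strong duality holds: the optimal values of the two problems are equal (and the optimum is attained in the primal problem).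
   Context: $\mathrm{Pos}(\mathcal{X})$ is the set of positive semidefinite operators on $\mathcal{X}$; $\langle A,B\rangle=\mathrm{Tr}(A^{*}B)$; $\preceq$ is the Loewner order. *)

theory Defs
  imports "HOL-Analysis.Analysis"
begin

text \<open>Operators on the finite-dimensional complex Euclidean space X = complex^'n
  are represented as complex matrices indexed by the finite type 'n.\<close>

definition cadj :: "complex^'n^'n \<Rightarrow> complex^'n^'n" where
  "cadj A = (\<chi> i j. cnj (A $ j $ i))"

definition hermitian :: "complex^'n^'n \<Rightarrow> bool" where
  "hermitian A \<longleftrightarrow> cadj A = A"

definition ctrace :: "complex^'n^'n \<Rightarrow> complex" where
  "ctrace A = (\<Sum>i\<in>UNIV. A $ i $ i)"

definition hs_inner :: "complex^'n^'n \<Rightarrow> complex^'n^'n \<Rightarrow> complex" where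
  "hs_inner A B = ctrace (cadj A ** B)"

definition psd :: "complex^'n^'n \<Rightarrow> bool" where
  "psd A \<longleftrightarrow> hermitian A \<and> (\<forall>x::complex^'n. 0 \<le> Re (\<Sum>i\<in>UNIV. cnj (x $ i) * (A *v x) $ i))"

definition loewner_le :: "complex^'n^'n \<Rightarrow> complex^'n^'n \<Rightarrow> bool" where
  "loewner_le A B \<longleftrightarrow> psd (B - A)"

definition primal_feasible ::
  "real \<Rightarrow> 'a set \<Rightarrow> ('a \<Rightarrow> complex^'n^'n) \<Rightarrow> 'b set \<Rightarrow> ('b \<Rightarrow> complex^'n^'n)
   \<Rightarrow> complex^'n^'n \<Rightarrow> real \<Rightarrow> bool" where
  "primal_feasible \<epsilon> \<Lambda> P0 \<Sigma> P1 X \<gamma> \<longleftrightarrow>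
     (\<forall>i\<in>\<Lambda>. Re (hs_inner X (P0 i)) \<ge> 1 - \<epsilon>) \<and>
     (\<forall>j\<in>\<Sigma>. Re (hs_inner X (P1 j)) \<le> \<gamma>) \<and>
     loewner_le X (mat 1) \<and> \<gamma> \<ge> 0 \<and> psd X"

definition dual_feasible ::
  "'a set \<Rightarrow> ('a \<Rightarrow> complex^'n^'n) \<Rightarrow> 'b set \<Rightarrow> ('b \<Rightarrow> complex^'n^'n)
   \<Rightarrow> ('a \<Rightarrow> real) \<Rightarrow> ('b \<Rightarrow> real) \<Rightarrow> complex^'n^'n \<Rightarrow> bool" where
  "dual_feasible \<Lambda> P0 \<Sigma> P1 z v Z \<longleftrightarrow>
     loewner_le ((\<Sum>i\<in>\<Lambda>. z i *\<^sub>R P0 i) - (\<Sum>j\<in>\<Sigma>. v j *\<^sub>R P1 j)) Z \<and>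
     (\<Sum>j\<in>\<Sigma>. v j) \<le> 1 \<and> (\<forall>j\<in>\<Sigma>. v j \<ge> 0) \<and> (\<forall>i\<in>\<Lambda>. z i \<ge> 0) \<and>
     psd Z \<and> hermitian Z"

definition dual_objective ::
  "real \<Rightarrow> 'a set \<Rightarrow> ('a \<Rightarrow> real) \<Rightarrow> complex^'n^'n \<Rightarrow> real" where
  "dual_objective \<epsilon> \<Lambda> z Z = (1 - \<epsilon>) * (\<Sum>i\<in>\<Lambda>. \<bar>z i\<bar>) - Re (ctrace Z)"

text \<open>Optimal values as extended reals (Inf of empty set = +\<infinity>).\<close>
definition primal_value ::
  "real \<Rightarrow> 'a set \<Rightarrow> ('a \<Rightarrow> complex^'n^'n) \<Rightarrow> 'b set \<Rightarrow> ('b \<Rightarrow> complex^'n^'n) \<Rightarrow> ereal" where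
  "primal_value \<epsilon> \<Lambda> P0 \<Sigma> P1 =
     (INF p \<in> {(X, \<gamma>). primal_feasible \<epsilon> \<Lambda> P0 \<Sigma> P1 X \<gamma>}. ereal (snd p))"

definition dual_value ::
  "real \<Rightarrow> 'a set \<Rightarrow> ('a \<Rightarrow> complex^'n^'n) \<Rightarrow> 'b set \<Rightarrow> ('b \<Rightarrow> complex^'n^'n) \<Rightarrow> ereal" where
  "dual_value \<epsilon> \<Lambda> P0 \<Sigma> P1 =
     (SUP d \<in> {(z, v, Z). dual_feasible \<Lambda> P0 \<Sigma> P1 z v Z}.
        ereal (dual_objective \<epsilon> \<Lambda> (fst d) (snd (snd d))))"

end

theory Submission
  imports Defs
begin


definition outer :: "complex^'n \<Rightarrow> complex^'n^'n" where
  "outer x = (\<chi> i j. x$i * cnj (x$j))"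

definition bf :: "complex^'n^'n \<Rightarrow> complex^'n \<Rightarrow> complex^'n \<Rightarrow> complex" where
  "bf B x y = (\<Sum>i\<in>UNIV. \<Sum>j\<in>UNIV. cnj (x$i) * B$i$j * y$j)"

lemma inner_outer_bf: "inner (outer x) B = Re (bf B x x)"
  unfolding outer_def bf_def inner_vec_def
  by (simp add: Re_sum inner_complex_def algebra_simps)

lemma bf_add_left: "bf B (x + y) z = bf B x z + bf B y z"
  unfolding bf_def by (simp add: algebra_simps sum.distrib)
lemma bf_add_right: "bf B x (y + z) = bf B x y + bf B x z"
  unfolding bf_def by (simp add: algebra_simps sum.distrib)
lemma bf_diff_mat: "bf (B - C) x y = bf B x y - bf C x y"
  unfolding bf_def by (simp add: algebra_simps sum_subtractf)
lemma scaleR_mat_nth: "(r *\<^sub>R (C::complex^'n^'n))$i$j = of_real r * C$i$j"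
  by (simp only: vector_scaleR_component) (simp add: scaleR_conv_of_real)

lemma bf_scaleR_mat: "bf (r *\<^sub>R C) x y = of_real r * bf C x y"
  unfolding bf_def scaleR_mat_nth by (simp add: algebra_simps sum_distrib_left)

lemma bf_axis_left: "bf B (axis k c) x = cnj c * (\<Sum>j\<in>UNIV. B$k$j * x$j)"
proof -
  have "bf B (axis k c) x = (\<Sum>i\<in>UNIV. if i = k then (\<Sum>j\<in>UNIV. cnj c * B$k$j * x$j) else 0)"
    unfolding bf_def by (rule sum.cong) (simp_all add: axis_def)
  also have "\<dots> = cnj c * (\<Sum>j\<in>UNIV. B$k$j * x$j)"
    by (simp add: sum_distrib_left mult.assoc)
  finally show ?thesis .
qed

lemma bf_axis_right_sum: fixes B :: "complex^'n^'n" shows "(\<Sum>j\<in>UNIV. B$k$j * axis l c $ j) = B$k$l * c"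
proof -
  have "(\<Sum>j\<in>UNIV. B$k$j * axis l c $ j) = (\<Sum>j\<in>UNIV. if j = l then B$k$l * c else 0)"
    apply (rule sum.cong) apply simp apply (simp add: axis_def) done
  then show ?thesis by simp
qed

lemma hermitian_iff: "hermitian A \<longleftrightarrow> (\<forall>i j. A$i$j = cnj (A$j$i))"
  unfolding hermitian_def cadj_def vec_eq_iff by (simp add: eq_commute)

lemma bf_herm_swap: assumes "hermitian B" shows "bf B x y = cnj (bf B y x)"
proof -
  have h: "B$i$j = cnj (B$j$i)" for i j using assms hermitian_iff by blast
  have "cnj (bf B y x) = (\<Sum>i\<in>UNIV. \<Sum>j\<in>UNIV. y$i * cnj (B$i$j) * cnj (x$j))"
    unfolding bf_def by simp
  also have "\<dots> = (\<Sum>i\<in>UNIV. \<Sum>j\<in>UNIV. cnj (x$j) * B$j$i * y$i)"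
    by (simp add: h[symmetric] mult.commute mult.left_commute)
  also have "\<dots> = bf B x y" unfolding bf_def by (rule sum.swap)
  finally show ?thesis by simp
qed

lemma qf_shift:
  assumes "hermitian B"
  shows "Re (bf B (x + axis k c) (x + axis k c)) =
    Re (bf B x x) + (cmod c)^2 * Re (B$k$k) + 2 * Re (cnj c * (\<Sum>j\<in>UNIV. B$k$j * x$j))"
proof -
  have yy: "bf B (axis k c) (axis k c) = cnj c * (B$k$k * c)"
    by (simp add: bf_axis_left bf_axis_right_sum)
  have f3: "Re (bf B (axis k c) (axis k c)) = (cmod c)^2 * Re (B$k$k)"
  proof -
    have "cnj c * (B$k$k * c) = B$k$k * of_real ((cmod c)^2)"
      unfolding complex_norm_square by (simp add: algebra_simps)
    then have "Re (cnj c * (B$k$k * c)) = Re (B$k$k * of_real ((cmod c)^2))" by (simp only:)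
    also have "\<dots> = (cmod c)^2 * Re (B$k$k)" by simp
    finally show ?thesis by (simp only: yy)
  qed
  have f1: "Re (bf B x (axis k c)) = Re (bf B (axis k c) x)"
    using bf_herm_swap[OF assms, of x "axis k c"] by simp
  have f2: "Re (bf B (axis k c) x) = Re (cnj c * (\<Sum>j\<in>UNIV. B$k$j * x$j))"
    by (simp only: bf_axis_left)
  have s: "Re (bf B (x + axis k c) (x + axis k c)) = Re (bf B x x) + Re (bf B x (axis k c))
      + Re (bf B (axis k c) x) + Re (bf B (axis k c) (axis k c))"
    by (simp only: bf_add_left bf_add_right plus_complex.sel add.assoc)
  show ?thesis using s f1 f2 f3 by linarith
qed


lemma cadj_add: "cadj (A + B) = cadj A + cadj B"
  unfolding cadj_def by (simp add: vec_eq_iff)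
lemma cadj_diff: "cadj (A - B) = cadj A - cadj B"
  unfolding cadj_def by (simp add: vec_eq_iff)
lemma cadj_minus: "cadj (- A) = - cadj A"
  unfolding cadj_def by (simp add: vec_eq_iff)
lemma cadj_scaleR: "cadj (r *\<^sub>R A) = r *\<^sub>R cadj A"
  unfolding cadj_def by (simp add: vec_eq_iff)
lemma cadj_zero: "cadj 0 = 0"
  unfolding cadj_def by (simp add: vec_eq_iff)
lemma cadj_cadj: "cadj (cadj A) = A"
  unfolding cadj_def by (simp add: vec_eq_iff)
lemma cadj_mat1: "cadj (mat 1) = mat 1"
  unfolding cadj_def by (simp add: vec_eq_iff mat_def)
lemma cadj_outer: "cadj (outer x) = outer x"
  unfolding cadj_def outer_def by (simp add: vec_eq_iff)
lemma cadj_sum: "finite S \<Longrightarrow> cadj (\<Sum>i\<in>S. f i) = (\<Sum>i\<in>S. cadj (f i))"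
  by (induction S rule: finite_induct) (auto simp: cadj_add cadj_zero)

lemma inner_cadj: "inner (cadj A) (cadj B) = inner A B"
  unfolding cadj_def inner_vec_def
  apply (subst sum.swap)
  apply (simp add: inner_complex_def)
  done

lemma herm_add: "hermitian A \<Longrightarrow> hermitian B \<Longrightarrow> hermitian (A + B)"
  by (simp add: hermitian_def cadj_add)
lemma herm_diff: "hermitian A \<Longrightarrow> hermitian B \<Longrightarrow> hermitian (A - B)"
  by (simp add: hermitian_def cadj_diff)
lemma herm_scaleR: "hermitian A \<Longrightarrow> hermitian (r *\<^sub>R A)"
  by (simp add: hermitian_def cadj_scaleR)
lemma herm_sum: "finite S \<Longrightarrow> (\<And>i. i \<in> S \<Longrightarrow> hermitian (f i)) \<Longrightarrow> hermitian (\<Sum>i\<in>S. f i)"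
  by (simp add: hermitian_def cadj_sum)
lemma herm_zero: "hermitian 0" by (simp add: hermitian_def cadj_zero)
lemma herm_mat1: "hermitian (mat 1)" by (simp add: hermitian_def cadj_mat1)
lemma herm_outer: "hermitian (outer x)" by (simp add: hermitian_def cadj_outer)

lemma psd_bf: "psd A \<longleftrightarrow> hermitian A \<and> (\<forall>x. 0 \<le> Re (bf A x x))"
proof -
  have "(\<Sum>i\<in>UNIV. cnj (x $ i) * (A *v x) $ i) = bf A x x" for x
    unfolding bf_def matrix_vector_mult_def by (simp add: sum_distrib_left mult.assoc)
  then show ?thesis unfolding psd_def by simp
qed

lemma psd_diag_zero:
  assumes "psd B" "B$k$k = 0"
  shows "B$k$j = 0"
proof (rule ccontr)
  assume ne: "B$k$j \<noteq> 0"
  have herm: "hermitian B" and nn: "\<And>x. 0 \<le> Re (bf B x x)" using assms(1) psd_bf by auto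
  define q where "q = (cmod (B$k$j))^2"
  have qpos: "q > 0" using ne unfolding q_def by simp
  have key: "0 \<le> Re (B$j$j) - 2 * t * q" for t
  proof -
    define c where "c = - (of_real t * B$k$j)"
    have "0 \<le> Re (bf B (axis j 1 + axis k c) (axis j 1 + axis k c))" by (rule nn)
    also have "\<dots> = Re (bf B (axis j 1) (axis j 1)) + (cmod c)^2 * Re (B$k$k)
        + 2 * Re (cnj c * (\<Sum>l\<in>UNIV. B$k$l * axis j 1 $ l))"
      by (rule qf_shift[OF herm])
    also have "Re (bf B (axis j 1) (axis j 1)) = Re (B$j$j)"
      by (simp add: bf_axis_left bf_axis_right_sum)
    also have "(\<Sum>l\<in>UNIV. B$k$l * axis j 1 $ l) = B$k$j"
      by (simp add: bf_axis_right_sum)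
    also have "cnj c * B$k$j = - (of_real t * of_real q)"
      unfolding c_def q_def complex_norm_square by (simp add: algebra_simps)
    finally show ?thesis using assms(2) by simp
  qed
  have "0 \<le> Re (B$j$j) - 2 * ((\<bar>Re (B$j$j)\<bar> + 1) / (2 * q)) * q" by (rule key)
  also have "\<dots> = Re (B$j$j) - (\<bar>Re (B$j$j)\<bar> + 1)" using qpos by (simp add: field_simps)
  finally show False by linarith
qed


lemma psd_reduce:
  assumes "psd B" "Re (B$k$k) > 0"
  defines "b \<equiv> (\<chi> i. B$i$k)"
  shows "psd (B - (1 / Re (B$k$k)) *\<^sub>R outer b)"
proof -
  have herm: "hermitian B" and nn: "\<And>x. 0 \<le> Re (bf B x x)" using assms(1) psd_bf by auto
  have h: "B$i$j = cnj (B$j$i)" for i j using herm hermitian_iff by blast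
  define \<beta> where "\<beta> = Re (B$k$k)"
  have bpos: "\<beta> > 0" using assms(2) \<beta>_def by simp
  have Bkk: "B$k$k = of_real \<beta>"
  proof -
    have "Im (B$k$k) = Im (cnj (B$k$k))" using h[of k k] by (rule arg_cong)
    then have "Im (B$k$k) = 0" by simp
    then show ?thesis unfolding \<beta>_def by (simp add: complex_eq_iff)
  qed
  have "0 \<le> Re (bf (B - (1/\<beta>) *\<^sub>R outer b) x x)" for x
  proof -
    define w where "w = (\<Sum>j\<in>UNIV. B$k$j * x$j)"
    have ob: "bf (outer b) x x = cnj w * w"
    proof -
      have "bf (outer b) x x = (\<Sum>i\<in>UNIV. cnj (x$i) * b$i) * (\<Sum>j\<in>UNIV. cnj (b$j) * x$j)"
        unfolding bf_def outer_def sum_product by (simp add: algebra_simps)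
      also have "(\<Sum>j\<in>UNIV. cnj (b$j) * x$j) = w"
        unfolding w_def b_def by (rule sum.cong) (simp_all only: vec_lambda_beta h[of k] UNIV_I)
      also have "(\<Sum>i\<in>UNIV. cnj (x$i) * b$i) = cnj w"
        unfolding w_def b_def cnj_sum
        by (rule sum.cong) (simp_all only: vec_lambda_beta h[of _ k] UNIV_I complex_cnj_mult complex_cnj_cnj mult.commute)
      finally show ?thesis .
    qed
    have "Re (bf (B - (1/\<beta>) *\<^sub>R outer b) x x) = Re (bf B x x) - (cmod w)^2 / \<beta>"
    proof -
      have "Re (cnj w * w) = (cmod w)^2"
        using cmod_power2[of w] by (simp add: power2_eq_square)
      then show ?thesis by (simp add: bf_diff_mat bf_scaleR_mat ob)
    qed
    also have "Re (bf B x x) - (cmod w)^2 / \<beta> = 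
      Re (bf B (x + axis k (- (w / of_real \<beta>))) (x + axis k (- (w / of_real \<beta>))))"
    proof -
      define c where "c = - (w / of_real \<beta>)"
      have c1: "(cmod c)^2 * Re (B$k$k) = (cmod w)^2 / \<beta>"
      proof -
        have n: "cmod c = cmod w / \<beta>" unfolding c_def using bpos by (simp add: norm_divide)
        have "(cmod c)^2 * Re (B$k$k) = (cmod w / \<beta>)^2 * \<beta>" unfolding n Bkk by simp
        also have "\<dots> = (cmod w)^2 / \<beta>" using bpos by (simp add: power2_eq_square field_simps)
        finally show ?thesis .
      qed
      have c2: "cnj c * w = - of_real ((cmod w)^2 / \<beta>)"
      proof -
        have "cnj c * w = - ((w * cnj w) / of_real \<beta>)" unfolding c_def by (simp add: mult.commute)
        also have "w * cnj w = of_real ((cmod w)^2)" by (rule complex_norm_square[symmetric])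
        finally show ?thesis by (simp only: of_real_divide)
      qed
      have "Re (bf B (x + axis k c) (x + axis k c)) = Re (bf B x x) + (cmod w)^2 / \<beta> + 2 * (-((cmod w)^2 / \<beta>))"
        using qf_shift[OF herm, of x k c] unfolding w_def[symmetric] c1 c2 by simp
      then show ?thesis unfolding c_def by simp
    qed
    also have "\<dots> \<ge> 0" by (rule nn)
    finally show ?thesis by simp
  qed
  moreover have "hermitian (B - (1/\<beta>) *\<^sub>R outer b)"
    by (rule herm_diff[OF herm herm_scaleR[OF herm_outer]])
  ultimately show ?thesis unfolding psd_bf \<beta>_def by simp
qed


lemma scaleR_complex: "r *\<^sub>R (z::complex) = of_real r * z"
  by (simp add: scaleR_conv_of_real)

lemma psd_diag:
  assumes "psd B"
  shows "B$k$k = of_real (Re (B$k$k))" "0 \<le> Re (B$k$k)"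
proof -
  have herm: "hermitian B" and nn: "\<And>x. 0 \<le> Re (bf B x x)" using assms(1) psd_bf by auto
  have "Im (B$k$k) = Im (cnj (B$k$k))" using herm hermitian_iff by metis
  then have "Im (B$k$k) = 0" by simp
  then show "B$k$k = of_real (Re (B$k$k))" by (simp add: complex_eq_iff)
  have "Re (bf B (axis k 1) (axis k 1)) = Re (B$k$k)"
    by (simp add: bf_axis_left bf_axis_right_sum)
  then show "0 \<le> Re (B$k$k)" using nn by metis
qed

lemma psd_outer: "psd A \<Longrightarrow> 0 \<le> inner A (outer x)"
  using psd_bf inner_outer_bf inner_commute by metis

lemma psd_inner_nonneg:
  assumes A: "psd A" and B: "psd B"
  shows "0 \<le> inner A B"
proof -
  have main: "\<forall>B. psd B \<and> (\<forall>i j. i \<notin> K \<longrightarrow> B$i$j = 0) \<longrightarrow> 0 \<le> inner A B"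
    if "finite K" for K :: "'a set"
    using that
  proof (induction K rule: finite_induct)
    case empty
    show ?case
    proof (intro allI impI)
      fix B :: "complex^'a^'a" assume "psd B \<and> (\<forall>i j. i \<notin> {} \<longrightarrow> B$i$j = 0)"
      then have "B = 0" by (simp add: vec_eq_iff)
      then show "0 \<le> inner A B" by simp
    qed
  next
    case (insert k K)
    show ?case
    proof (intro allI impI)
      fix B :: "complex^'a^'a"
      assume asm: "psd B \<and> (\<forall>i j. i \<notin> insert k K \<longrightarrow> B$i$j = 0)"
      then have pB: "psd B" and zr: "\<And>i j. i \<notin> insert k K \<Longrightarrow> B$i$j = 0" by auto
      have herm: "hermitian B" using pB psd_bf by auto
      have h: "B$i$j = cnj (B$j$i)" for i j using herm hermitian_iff by blast
      show "0 \<le> inner A B"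
      proof (cases "Re (B$k$k) > 0")
        case False
        then have "Re (B$k$k) = 0" using psd_diag(2)[OF pB, of k] by linarith
        then have "B$k$k = 0" using psd_diag(1)[OF pB, of k] by simp
        then have rk: "B$k$j = 0" for j using psd_diag_zero[OF pB] by blast
        have "\<forall>i j. i \<notin> K \<longrightarrow> B$i$j = 0" using zr rk by (metis insert_iff)
        then show ?thesis using insert.IH pB by blast
      next
        case True
        define \<beta> where "\<beta> = Re (B$k$k)"
        define b where "b = (\<chi> i. B$i$k)"
        define B' where "B' = B - (1 / \<beta>) *\<^sub>R outer b"
        have bpos: "\<beta> > 0" using True \<beta>_def by simp
        have Bkk: "B$k$k = of_real \<beta>" using psd_diag(1)[OF pB, of k] \<beta>_def by simp
        have pB': "psd B'" unfolding B'_def \<beta>_def b_def by (rule psd_reduce[OF pB True])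
        have "B'$i$j = 0" if "i \<notin> K" for i j
        proof (cases "i = k")
          case True
          have "B'$k$j = B$k$j - of_real (1/\<beta>) * (B$k$k * cnj (B$j$k))"
            unfolding B'_def b_def outer_def by (simp add: scaleR_complex)
          also have "cnj (B$j$k) = B$k$j" using h[of k j] by simp
          finally show ?thesis using True Bkk bpos by simp
        next
          case False
          then have "i \<notin> insert k K" using that by simp
          then have "B$i$j = 0" "B$i$k = 0" using zr by auto
          then show ?thesis unfolding B'_def b_def outer_def by (simp add: scaleR_mat_nth)
        qed
        then have "0 \<le> inner A B'" using insert.IH pB' by blast
        moreover have "0 \<le> inner A (outer b)" by (rule psd_outer[OF A])
        moreover have "inner A B = inner A B' + (1/\<beta>) * inner A (outer b)"
          unfolding B'_def by (simp add: inner_diff_right)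
        ultimately show ?thesis using bpos by simp
      qed
    qed
  qed
  have "\<forall>i j. i \<notin> (UNIV::'a set) \<longrightarrow> B$i$j = 0" by simp
  then show ?thesis using main[OF finite] B by blast
qed

lemma inner_complex_cnj: "inner (a::complex) b = Re (cnj a * b)"
  by (simp add: inner_complex_def)

lemma re_hs: "Re (hs_inner A B) = inner A B"
proof -
  have "hs_inner A B = (\<Sum>i\<in>UNIV. \<Sum>k\<in>UNIV. cnj (A$k$i) * B$k$i)"
    unfolding hs_inner_def ctrace_def cadj_def matrix_matrix_mult_def by simp
  also have "\<dots> = (\<Sum>k\<in>UNIV. \<Sum>i\<in>UNIV. cnj (A$k$i) * B$k$i)" by (rule sum.swap)
  finally show ?thesis by (simp add: Re_sum inner_vec_def inner_complex_cnj)
qed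

lemma re_trace: fixes Z :: "complex^'n^'n" shows "Re (ctrace Z) = inner (mat 1) Z"
proof -
  have *: "(\<Sum>j\<in>UNIV. inner ((mat 1 :: complex^'n^'n) $ i $ j) (Z $ i $ j)) = Re (Z $ i $ i)" for i
  proof -
    have "(\<Sum>j\<in>UNIV. inner ((mat 1 :: complex^'n^'n) $ i $ j) (Z $ i $ j))
        = (\<Sum>j\<in>UNIV. if j = i then Re (Z $ i $ i) else 0)"
      by (rule sum.cong) (auto simp: mat_def inner_complex_def)
    also have "\<dots> = Re (Z $ i $ i)" by simp
    finally show ?thesis .
  qed
  show ?thesis
    unfolding ctrace_def inner_vec_def by (simp only: * Re_sum)
qed




lemma inner_M:
  "inner X ((\<Sum>i\<in>L. z i *\<^sub>R F i) - (\<Sum>j\<in>S. v j *\<^sub>R G j))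
   = (\<Sum>i\<in>L. z i * inner X (F i)) - (\<Sum>j\<in>S. v j * inner X (G j))"
  by (simp add: inner_diff_right inner_sum_right)

lemma weak_duality:
  assumes fL: "finite L" and fS: "finite S"
    and pf: "primal_feasible \<epsilon> L P0 S P1 X \<gamma>"
    and df: "dual_feasible L P0 S P1 z v Z"
  shows "dual_objective \<epsilon> L z Z \<le> \<gamma>"
proof -
  let ?M = "(\<Sum>i\<in>L. z i *\<^sub>R P0 i) - (\<Sum>j\<in>S. v j *\<^sub>R P1 j)"
  have p0: "\<And>i. i \<in> L \<Longrightarrow> 1 - \<epsilon> \<le> inner X (P0 i)"
    and p1: "\<And>j. j \<in> S \<Longrightarrow> inner X (P1 j) \<le> \<gamma>"
    and pI: "psd (mat 1 - X)" and g0: "\<gamma> \<ge> 0" and pX: "psd X"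
    using pf unfolding primal_feasible_def loewner_le_def re_hs by auto
  have pZM: "psd (Z - ?M)" and sv: "(\<Sum>j\<in>S. v j) \<le> 1" and v0: "\<And>j. j \<in> S \<Longrightarrow> v j \<ge> 0"
    and z0: "\<And>i. i \<in> L \<Longrightarrow> z i \<ge> 0" and pZ: "psd Z"
    using df unfolding dual_feasible_def loewner_le_def by auto
  have 1: "0 \<le> inner X (Z - ?M)" by (rule psd_inner_nonneg[OF pX pZM])
  have 2: "0 \<le> inner (mat 1 - X) Z" by (rule psd_inner_nonneg[OF pI pZ])
  have 3: "(\<Sum>i\<in>L. z i * (1 - \<epsilon>)) \<le> (\<Sum>i\<in>L. z i * inner X (P0 i))"
    by (rule sum_mono) (simp add: mult_left_mono p0 z0)
  have 4: "(\<Sum>j\<in>S. v j * inner X (P1 j)) \<le> (\<Sum>j\<in>S. v j * \<gamma>)"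
    by (rule sum_mono) (simp add: mult_left_mono p1 v0)
  have 5: "(\<Sum>j\<in>S. v j * \<gamma>) \<le> \<gamma>"
  proof -
    have "(\<Sum>j\<in>S. v j * \<gamma>) = \<gamma> * (\<Sum>j\<in>S. v j)" by (simp add: sum_distrib_left mult.commute)
    also have "\<dots> \<le> \<gamma> * 1" using g0 sv by (rule mult_left_mono[rotated])
    finally show ?thesis by simp
  qed
  have 6: "(\<Sum>i\<in>L. \<bar>z i\<bar>) = (\<Sum>i\<in>L. z i)" using z0 by (intro sum.cong) auto
  have "dual_objective \<epsilon> L z Z = (\<Sum>i\<in>L. z i * (1 - \<epsilon>)) - inner (mat 1) Z"
    unfolding dual_objective_def re_trace 6 by (simp add: sum_distrib_left mult.commute)
  also have "\<dots> \<le> \<gamma>"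
    using 1 2 3 4 5 inner_M[where X=X and L=L and z=z and F=P0 and S=S and v=v and G=P1] by (simp add: inner_diff_right inner_diff_left)
  finally show ?thesis .
qed


lemma lin_nonneg:
  fixes c q :: real
  assumes "\<And>t. t \<ge> 0 \<Longrightarrow> 0 \<le> c + t * q"
  shows "0 \<le> q"
proof (rule ccontr)
  assume "\<not> 0 \<le> q"
  then have q: "q < 0" by simp
  have "0 \<le> c + ((\<bar>c\<bar> + 1) / (- q)) * q" using q by (intro assms) (simp add: divide_nonneg_neg)
  also have "\<dots> = c - (\<bar>c\<bar> + 1)" using q by (simp add: field_simps)
  finally show False by linarith
qed

lemma lin_zero:
  fixes c q :: real
  assumes "\<And>t. 0 \<le> c + t * q"
  shows "q = 0"
proof -
  have "0 \<le> q" by (rule lin_nonneg) (rule assms)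
  moreover have "0 \<le> - q"
  proof (rule lin_nonneg)
    fix t :: real show "0 \<le> c + t * - q" using assms[of "- t"] by simp
  qed
  ultimately show ?thesis by simp
qed

lemma psd_inner_iff: "psd A \<longleftrightarrow> hermitian A \<and> (\<forall>x. 0 \<le> inner (outer x) A)"
  unfolding psd_bf inner_outer_bf ..

lemma psd_comb:
  assumes "psd A" "psd B" "0 \<le> a" "0 \<le> b"
  shows "psd (a *\<^sub>R A + b *\<^sub>R B)"
  using assms unfolding psd_inner_iff
  by (auto intro!: herm_add herm_scaleR add_nonneg_nonneg mult_nonneg_nonneg simp: inner_add_right)

lemma psd_scale: "psd A \<Longrightarrow> 0 \<le> a \<Longrightarrow> psd (a *\<^sub>R A)"
  using psd_comb[of A A a 0] by simp

lemma psd_zero: "psd (0::complex^'n^'n)"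
  unfolding psd_inner_iff by (simp add: herm_zero)

lemma psd_outer_mat: "psd (outer b)"
proof -
  have "0 \<le> Re (bf (outer b) x x)" for x
  proof -
    define u where "u = (\<Sum>j\<in>UNIV. cnj (b$j) * x$j)"
    have "bf (outer b) x x = (\<Sum>i\<in>UNIV. cnj (x$i) * b$i) * u"
      unfolding bf_def outer_def sum_product u_def by (simp add: algebra_simps)
    also have "(\<Sum>i\<in>UNIV. cnj (x$i) * b$i) = cnj u"
      unfolding u_def cnj_sum by (simp add: mult.commute)
    finally have "bf (outer b) x x = cnj u * u" .
    moreover have "Re (cnj u * u) = (cmod u)^2"
      using cmod_power2[of u] by (simp add: power2_eq_square)
    ultimately show ?thesis by simp
  qed
  then show ?thesis unfolding psd_bf using herm_outer by blast
qed

definition hpart :: "complex^'n^'n \<Rightarrow> complex^'n^'n" where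
  "hpart Y = (1/2) *\<^sub>R (Y + cadj Y)"

lemma hpart_herm: "hermitian Y \<Longrightarrow> hpart Y = Y"
  unfolding hpart_def hermitian_def by simp

lemma hpart_lin: "hpart (a *\<^sub>R Y1 + b *\<^sub>R Y2) = a *\<^sub>R hpart Y1 + b *\<^sub>R hpart Y2"
  unfolding hpart_def cadj_add cadj_scaleR by (simp add: algebra_simps)

lemma hpart_scale: "hpart (t *\<^sub>R Y) = t *\<^sub>R hpart Y"
  using hpart_lin[of t Y 0 Y] by simp

lemma hpart_zero: "hpart 0 = 0"
  unfolding hpart_def cadj_zero by simp

definition Mf :: "'a set \<Rightarrow> ('a \<Rightarrow> complex^'n^'n) \<Rightarrow> 'b set \<Rightarrow> ('b \<Rightarrow> complex^'n^'n)
   \<Rightarrow> ('a \<Rightarrow> real) \<Rightarrow> ('b \<Rightarrow> real) \<Rightarrow> complex^'n^'n" where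
  "Mf L F S G z v = (\<Sum>i\<in>L. z i *\<^sub>R F i) - (\<Sum>j\<in>S. v j *\<^sub>R G j)"

lemma Mf_comb:
  "Mf L F S G (\<lambda>i. a * z1 i + b * z2 i) (\<lambda>j. a * v1 j + b * v2 j)
   = a *\<^sub>R Mf L F S G z1 v1 + b *\<^sub>R Mf L F S G z2 v2"
  unfolding Mf_def by (simp add: scaleR_add_left sum.distrib scaleR_sum_right algebra_simps)

lemma Mf_zero: "Mf L F S G (\<lambda>i. 0) (\<lambda>j. 0) = 0"
  unfolding Mf_def by simp

lemma sum_if_scale:
  fixes F :: "'a \<Rightarrow> complex^'n^'n"
  assumes "finite L" "i \<in> L"
  shows "(\<Sum>k\<in>L. (if k = i then t else 0) *\<^sub>R F k) = t *\<^sub>R F i"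
proof -
  have "(\<Sum>k\<in>L. (if k = i then t else 0) *\<^sub>R F k) = (\<Sum>k\<in>L. if k = i then t *\<^sub>R F k else 0)"
    by (rule sum.cong) simp_all
  also have "\<dots> = t *\<^sub>R F i" using assms by simp
  finally show ?thesis .
qed

lemma sum_if_real:
  assumes "finite L" "i \<in> L"
  shows "(\<Sum>k\<in>L. (if k = i then t else 0::real)) = t"
  using assms by simp


lemma sep:
  fixes P0 :: "'a \<Rightarrow> complex^'n^'n" and P1 :: "'b \<Rightarrow> complex^'n^'n"
  assumes fL: "finite L" and fS: "finite S"
    and p0: "\<forall>i\<in>L. psd (P0 i)" and p1: "\<forall>j\<in>S. psd (P1 j)"
    and bound: "\<And>z v Z. dual_feasible L P0 S P1 z v Z \<Longrightarrow> dual_objective \<epsilon> L z Z < d"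
  shows "\<exists>X \<gamma>. primal_feasible \<epsilon> L P0 S P1 X \<gamma> \<and> \<gamma> \<le> d"
proof -
  define obj where "obj z Z = (1 - \<epsilon>) * (\<Sum>i\<in>L. z i) - inner (mat 1) Z"
    for z and Z :: "complex^'n^'n"
  define M where "M = Mf L P0 S P1"
  define G :: "(real \<times> (complex^'n^'n) \<times> real) set" where
    "G = {(\<alpha>, Y, \<beta>). \<exists>z v Z. (\<forall>i\<in>L. 0 \<le> z i) \<and> (\<forall>j\<in>S. 0 \<le> v j) \<and> psd Z \<and>
       \<alpha> + d \<le> obj z Z \<and> psd (Z - M z v - hpart Y) \<and> \<beta> \<le> 1 - (\<Sum>j\<in>S. v j)}"
  have memG: "(\<alpha>, Y, \<beta>) \<in> G"
    if "\<forall>i\<in>L. 0 \<le> z i" "\<forall>j\<in>S. 0 \<le> v j" "psd Z" "\<alpha> + d \<le> obj z Z"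
       "psd (Z - M z v - hpart Y)" "\<beta> \<le> 1 - (\<Sum>j\<in>S. v j)" for z v Z \<alpha> Y \<beta>
    unfolding G_def using that by blast
  have hermP0: "hermitian (P0 i)" if "i \<in> L" for i using p0 that psd_bf by blast
  have hermP1: "hermitian (P1 j)" if "j \<in> S" for j using p1 that psd_bf by blast
  have hermM: "hermitian (M z v)" for z v
    unfolding M_def Mf_def
    by (intro herm_diff herm_sum fL fS herm_scaleR hermP0 hermP1)
  have obj_lin: "obj (\<lambda>i. u * z1 i + w * z2 i) (u *\<^sub>R Z1 + w *\<^sub>R Z2) = u * obj z1 Z1 + w * obj z2 Z2"
    for u w z1 z2 Z1 Z2
    unfolding obj_def by (simp add: sum.distrib sum_distrib_left inner_add_right algebra_simps)
  have M0: "M (\<lambda>i. 0) (\<lambda>j. 0) = 0" unfolding M_def by (rule Mf_zero)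
  have obj0: "obj (\<lambda>i. 0) Z = - inner (mat 1) Z" for Z unfolding obj_def by simp

  have cvx: "convex G"
  proof (unfold convex_def, intro ballI allI impI)
    fix g1 g2 :: "real \<times> (complex^'n^'n) \<times> real" and u w :: real
    assume g1: "g1 \<in> G" and g2: "g2 \<in> G" and u: "0 \<le> u" and w: "0 \<le> w" and uw: "u + w = 1"
    obtain \<alpha>1 Y1 \<beta>1 where e1: "g1 = (\<alpha>1, Y1, \<beta>1)" by (cases g1) blast
    obtain \<alpha>2 Y2 \<beta>2 where e2: "g2 = (\<alpha>2, Y2, \<beta>2)" by (cases g2) blast
    obtain z1 v1 Z1 where w1: "\<forall>i\<in>L. 0 \<le> z1 i" "\<forall>j\<in>S. 0 \<le> v1 j" "psd Z1" "\<alpha>1 + d \<le> obj z1 Z1"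
       "psd (Z1 - M z1 v1 - hpart Y1)" "\<beta>1 \<le> 1 - (\<Sum>j\<in>S. v1 j)"
      using g1 unfolding e1 G_def by blast
    obtain z2 v2 Z2 where w2: "\<forall>i\<in>L. 0 \<le> z2 i" "\<forall>j\<in>S. 0 \<le> v2 j" "psd Z2" "\<alpha>2 + d \<le> obj z2 Z2"
       "psd (Z2 - M z2 v2 - hpart Y2)" "\<beta>2 \<le> 1 - (\<Sum>j\<in>S. v2 j)"
      using g2 unfolding e2 G_def by blast
    have "(u * \<alpha>1 + w * \<alpha>2, u *\<^sub>R Y1 + w *\<^sub>R Y2, u * \<beta>1 + w * \<beta>2) \<in> G"
    proof (rule memG[where z="\<lambda>i. u * z1 i + w * z2 i" and v="\<lambda>j. u * v1 j + w * v2 j"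
          and Z="u *\<^sub>R Z1 + w *\<^sub>R Z2"])
      show "\<forall>i\<in>L. 0 \<le> u * z1 i + w * z2 i" using w1(1) w2(1) u w by simp
      show "\<forall>j\<in>S. 0 \<le> u * v1 j + w * v2 j" using w1(2) w2(2) u w by simp
      show "psd (u *\<^sub>R Z1 + w *\<^sub>R Z2)" by (rule psd_comb[OF w1(3) w2(3) u w])
      have "u * (\<alpha>1 + d) \<le> u * obj z1 Z1" using w1(4) u by (rule mult_left_mono)
      moreover have "w * (\<alpha>2 + d) \<le> w * obj z2 Z2" using w2(4) w by (rule mult_left_mono)
      moreover have "d * u + d * w = d" using uw by (metis distrib_left mult.right_neutral)
      ultimately show "u * \<alpha>1 + w * \<alpha>2 + d \<le> obj (\<lambda>i. u * z1 i + w * z2 i) (u *\<^sub>R Z1 + w *\<^sub>R Z2)"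
        unfolding obj_lin by (simp add: algebra_simps; linarith)
      have "u *\<^sub>R Z1 + w *\<^sub>R Z2 - M (\<lambda>i. u * z1 i + w * z2 i) (\<lambda>j. u * v1 j + w * v2 j)
            - hpart (u *\<^sub>R Y1 + w *\<^sub>R Y2)
          = u *\<^sub>R (Z1 - M z1 v1 - hpart Y1) + w *\<^sub>R (Z2 - M z2 v2 - hpart Y2)"
        unfolding M_def Mf_comb hpart_lin by (simp add: algebra_simps)
      then show "psd (u *\<^sub>R Z1 + w *\<^sub>R Z2 - M (\<lambda>i. u * z1 i + w * z2 i) (\<lambda>j. u * v1 j + w * v2 j)
            - hpart (u *\<^sub>R Y1 + w *\<^sub>R Y2))"
        using psd_comb[OF w1(5) w2(5) u w] by simp
      have "u * \<beta>1 \<le> u * (1 - (\<Sum>j\<in>S. v1 j))" using w1(6) u by (rule mult_left_mono)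
      moreover have "w * \<beta>2 \<le> w * (1 - (\<Sum>j\<in>S. v2 j))" using w2(6) w by (rule mult_left_mono)
      ultimately show "u * \<beta>1 + w * \<beta>2 \<le> 1 - (\<Sum>j\<in>S. u * v1 j + w * v2 j)"
        using uw by (simp add: sum.distrib sum_distrib_left algebra_simps)
    qed
    then show "u *\<^sub>R g1 + w *\<^sub>R g2 \<in> G" unfolding e1 e2 by simp
  qed

  have notin: "0 \<notin> G"
  proof
    assume "0 \<in> G"
    then obtain z v Z where w: "\<forall>i\<in>L. 0 \<le> z i" "\<forall>j\<in>S. 0 \<le> v j" "psd Z" "0 + d \<le> obj z Z"
       "psd (Z - M z v - hpart 0)" "0 \<le> 1 - (\<Sum>j\<in>S. v j)"
      unfolding G_def zero_prod_def by blast
    have df: "dual_feasible L P0 S P1 z v Z"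
      unfolding dual_feasible_def loewner_le_def
      using w psd_bf[of Z] unfolding M_def Mf_def hpart_zero by simp
    have "(\<Sum>i\<in>L. \<bar>z i\<bar>) = (\<Sum>i\<in>L. z i)" using w(1) by (intro sum.cong) auto
    then have "dual_objective \<epsilon> L z Z = obj z Z"
      unfolding dual_objective_def obj_def re_trace by simp
    then show False using bound[OF df] w(4) by simp
  qed

  obtain a where a0: "a \<noteq> 0" and sepa: "\<forall>g\<in>G. 0 \<le> inner a g"
    using separating_hyperplane_set_0[OF cvx notin] by blast
  obtain lam X' mu where ea: "a = (lam, X', mu)" by (cases a) blast
  have H: "0 \<le> lam * \<alpha> + inner X' Y + mu * \<beta>" if "(\<alpha>, Y, \<beta>) \<in> G" for \<alpha> Y \<beta>
    using sepa that unfolding ea by fastforce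
  have base: "psd (0 - M (\<lambda>i. 0) (\<lambda>j. 0) - hpart 0)"
    unfolding M0 hpart_zero by (simp add: psd_zero)
  have la: "0 \<le> - lam"
  proof (rule lin_nonneg[where c="- lam * d"])
    fix t :: real assume t: "0 \<le> t"
    have "(- d - t, 0, 0) \<in> G"
      by (rule memG[where z="\<lambda>i. 0" and v="\<lambda>j. 0" and Z=0]) (use t base in \<open>simp_all add: obj0 psd_zero\<close>)
    from H[OF this] show "0 \<le> - lam * d + t * - lam" by (simp add: algebra_simps)
  qed
  have mb: "0 \<le> - mu"
  proof (rule lin_nonneg[where c="- lam * d"])
    fix t :: real assume t: "0 \<le> t"
    have "(- d, 0, - t) \<in> G"
      by (rule memG[where z="\<lambda>i. 0" and v="\<lambda>j. 0" and Z=0]) (use t base in \<open>simp_all add: obj0 psd_zero\<close>)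
    from H[OF this] show "0 \<le> - lam * d + t * - mu" by (simp add: algebra_simps)
  qed
  define K where "K = X' - cadj X'"
  have hK: "hpart K = 0" unfolding hpart_def K_def cadj_diff cadj_cadj by simp
  have iK: "inner X' K = 0"
  proof (rule lin_zero[where c="- lam * d"])
    fix t :: real
    have "hpart (t *\<^sub>R K) = 0" unfolding hpart_scale hK by simp
    then have "(- d, t *\<^sub>R K, 0) \<in> G"
      by (intro memG[where z="\<lambda>i. 0" and v="\<lambda>j. 0" and Z=0]) (use base in \<open>simp_all add: obj0 psd_zero M0\<close>)
    from H[OF this] show "0 \<le> - lam * d + t * inner X' K" by (simp add: algebra_simps)
  qed
  have "cadj K = - K" unfolding K_def cadj_diff cadj_cadj by simp
  then have "inner (cadj X') K = - inner X' K"
    using inner_cadj[of "cadj X'" K] unfolding cadj_cadj by simp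
  then have "inner K K = 0" unfolding K_def[symmetric] using iK
    by (simp add: K_def inner_diff_left)
  then have "K = 0" by simp
  then have hX': "hermitian X'" unfolding K_def hermitian_def by simp
  have oX': "0 \<le> - inner X' (outer x)" for x
  proof (rule lin_nonneg[where c="- lam * d"])
    fix t :: real assume t: "0 \<le> t"
    have hp: "hpart ((- t) *\<^sub>R outer x) = (- t) *\<^sub>R outer x"
      by (intro hpart_herm herm_scaleR herm_outer)
    have "psd (0 - M (\<lambda>i. 0) (\<lambda>j. 0) - hpart ((- t) *\<^sub>R outer x))"
      unfolding hp M0 using psd_scale[OF psd_outer_mat t, of x] by simp
    then have "(- d, (- t) *\<^sub>R outer x, 0) \<in> G"
      by (intro memG[where z="\<lambda>i. 0" and v="\<lambda>j. 0" and Z=0]) (simp_all add: obj0 psd_zero)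
    from H[OF this] show "0 \<le> - lam * d + t * - inner X' (outer x)" by (simp add: algebra_simps)
  qed
  define X where "X = - X'"
  define l where "l = - lam"
  define m where "m = - mu"
  have pX: "psd X"
    unfolding psd_inner_iff X_def using hX' oX'
    by (simp add: hermitian_def cadj_minus inner_commute)
  have E: "l * (obj z Z - d) + inner X (Z - M z v) + m * (1 - (\<Sum>j\<in>S. v j)) \<le> 0"
    if "\<forall>i\<in>L. 0 \<le> z i" "\<forall>j\<in>S. 0 \<le> v j" "psd Z" for z v Z
  proof -
    have hZ: "hermitian Z" using that(3) psd_bf by blast
    have "hpart (Z - M z v) = Z - M z v" by (intro hpart_herm herm_diff hZ hermM)
    then have "(obj z Z - d, Z - M z v, 1 - (\<Sum>j\<in>S. v j)) \<in> G"
      by (intro memG[where z=z and v=v and Z=Z]) (simp_all add: that psd_zero)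
    from H[OF this] show ?thesis unfolding l_def m_def X_def by (simp add: algebra_simps)
  qed
  have z0: "\<forall>i\<in>L. 0 \<le> (0::real)" and v0: "\<forall>j\<in>S. 0 \<le> (0::real)" by simp_all
  have E0: "- l * d + m \<le> 0"
    using E[OF z0 v0 psd_zero] unfolding obj0 M0 by simp
  have l0: "0 \<le> l" using la l_def by simp
  have m0: "0 \<le> m" using mb m_def by simp
  have lpos: "0 < l"
  proof (rule ccontr)
    assume "\<not> 0 < l"
    then have l00: "l = 0" using l0 by simp
    then have "m = 0" using E0 m0 by simp
    have "inner X X \<le> 0"
      using E[OF z0 v0 pX] unfolding M0 l00 \<open>m = 0\<close> by simp
    then have "inner X X = 0" using inner_ge_zero[of X] by linarith
    then have "X = 0" by simp
    then have "a = 0" unfolding ea using l00 \<open>m = 0\<close> l_def m_def X_def by (simp add: zero_prod_def)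
    then show False using a0 by simp
  qed
  define Xh where "Xh = (1 / l) *\<^sub>R X"
  define gh where "gh = m / l"
  have g_le: "gh \<le> d" unfolding gh_def using E0 lpos by (simp add: divide_le_eq algebra_simps)
  have g0: "0 \<le> gh" unfolding gh_def using m0 lpos by simp
  have pXh: "psd Xh" unfolding Xh_def using pX lpos by (intro psd_scale) simp_all
  have pI: "psd (mat 1 - Xh)"
    unfolding psd_inner_iff
  proof (intro conjI allI)
    show "hermitian (mat 1 - Xh)"
      using pXh psd_bf herm_mat1 herm_diff by blast
    fix x
    have "0 \<le> l * inner (mat 1) (outer x) - inner X (outer x)"
    proof (rule lin_nonneg[where c="l * d - m"])
      fix t :: real assume t: "0 \<le> t"
      have "psd (t *\<^sub>R outer x)" by (rule psd_scale[OF psd_outer_mat t])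
      from E[OF z0 v0 this] show "0 \<le> l * d - m + t * (l * inner (mat 1) (outer x) - inner X (outer x))"
        unfolding M0 obj0 by (simp add: algebra_simps)
    qed
    then have "0 \<le> (1 / l) * (l * inner (mat 1) (outer x) - inner X (outer x))"
      using lpos by simp
    then show "0 \<le> inner (outer x) (mat 1 - Xh)"
      unfolding Xh_def using lpos by (simp add: inner_diff_right inner_commute algebra_simps)
  qed
  have P0c: "1 - \<epsilon> \<le> inner Xh (P0 i)" if i: "i \<in> L" for i
  proof -
    have "0 \<le> inner X (P0 i) - l * (1 - \<epsilon>)"
    proof (rule lin_nonneg[where c="l * d - m"])
      fix t :: real assume t: "0 \<le> t"
      have zi: "\<forall>k\<in>L. 0 \<le> (if k = i then t else 0)" using t by simp
      have o: "obj (\<lambda>k. if k = i then t else 0) 0 = (1 - \<epsilon>) * t"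
        unfolding obj_def using fL i by simp
      have Mi: "M (\<lambda>k. if k = i then t else 0) (\<lambda>j. 0) = t *\<^sub>R P0 i"
        unfolding M_def Mf_def using sum_if_scale[OF fL i] by simp
      from E[OF zi v0 psd_zero] show "0 \<le> l * d - m + t * (inner X (P0 i) - l * (1 - \<epsilon>))"
        unfolding o Mi by (simp add: algebra_simps)
    qed
    then have "l * (1 - \<epsilon>) \<le> inner X (P0 i)" by simp
    then show ?thesis unfolding Xh_def using lpos by (simp add: field_simps)
  qed
  have P1c: "inner Xh (P1 j) \<le> gh" if j: "j \<in> S" for j
  proof -
    have "0 \<le> m - inner X (P1 j)"
    proof (rule lin_nonneg[where c="l * d - m"])
      fix t :: real assume t: "0 \<le> t"
      have vj: "\<forall>k\<in>S. 0 \<le> (if k = j then t else 0)" using t by simp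
      have Mj: "M (\<lambda>i. 0) (\<lambda>k. if k = j then t else 0) = - (t *\<^sub>R P1 j)"
        unfolding M_def Mf_def using sum_if_scale[OF fS j] by simp
      have sv: "(\<Sum>k\<in>S. (if k = j then t else 0)) = t" using fS j by simp
      from E[OF z0 vj psd_zero] show "0 \<le> l * d - m + t * (m - inner X (P1 j))"
        unfolding obj0 Mj sv by (simp add: algebra_simps)
    qed
    then have "inner X (P1 j) \<le> m" by simp
    then show ?thesis unfolding Xh_def gh_def using lpos by (simp add: field_simps)
  qed
  have "primal_feasible \<epsilon> L P0 S P1 Xh gh"
    unfolding primal_feasible_def loewner_le_def re_hs
    using P0c P1c pI g0 pXh by blast
  then show ?thesis using g_le by blast
qed


lemma cadj_cont: "continuous_on S (cadj :: complex^'n^'n \<Rightarrow> complex^'n^'n)"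
proof -
  have "linear (cadj :: complex^'n^'n \<Rightarrow> complex^'n^'n)"
    by (rule linearI) (simp_all add: cadj_add cadj_scaleR)
  then have "bounded_linear (cadj :: complex^'n^'n \<Rightarrow> complex^'n^'n)"
    using linear_conv_bounded_linear by blast
  then show ?thesis by (rule linear_continuous_on)
qed

lemma closed_psd:
  fixes f :: "'a::topological_space \<Rightarrow> complex^'n^'n"
  assumes f: "continuous_on UNIV f"
  shows "closed {p. psd (f p)}"
proof -
  have e: "{p. psd (f p)} = {p. cadj (f p) = f p} \<inter> {p. \<forall>x. 0 \<le> inner (outer x) (f p)}"
    unfolding psd_inner_iff hermitian_def by blast
  have c1: "closed {p. cadj (f p) = f p}"
  proof (rule closed_Collect_eq)
    show "continuous_on UNIV (\<lambda>p. cadj (f p))"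
      using continuous_on_compose[OF f cadj_cont] by (simp add: o_def)
  qed (rule f)
  have c2: "closed {p. \<forall>x. 0 \<le> inner (outer x) (f p)}"
    by (intro closed_Collect_all closed_Collect_le continuous_on_const continuous_on_inner f)
  show ?thesis unfolding e using c1 c2 by (rule closed_Int)
qed

lemma attain:
  fixes P0 :: "'a \<Rightarrow> complex^'n^'n" and P1 :: "'b \<Rightarrow> complex^'n^'n"
  assumes fL: "finite L" and fS: "finite S"
    and feas: "primal_feasible \<epsilon> L P0 S P1 X1 \<gamma>1"
  shows "\<exists>X0 \<gamma>0. primal_feasible \<epsilon> L P0 S P1 X0 \<gamma>0 \<and>
           (\<forall>X \<gamma>. primal_feasible \<epsilon> L P0 S P1 X \<gamma> \<longrightarrow> \<gamma>0 \<le> \<gamma>)"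
proof -
  define T :: "((complex^'n^'n) \<times> real) set" where
    "T = {p. primal_feasible \<epsilon> L P0 S P1 (fst p) (snd p) \<and> snd p \<le> \<gamma>1}"
  have Te: "T = {p. \<forall>i. i \<in> L \<longrightarrow> 1 - \<epsilon> \<le> inner (fst p) (P0 i)}
     \<inter> {p. \<forall>j. j \<in> S \<longrightarrow> inner (fst p) (P1 j) \<le> snd p}
     \<inter> {p. psd (mat 1 - fst p)} \<inter> {p. 0 \<le> snd p} \<inter> {p. psd (fst p)} \<inter> {p. snd p \<le> \<gamma>1}"
    unfolding T_def primal_feasible_def loewner_le_def re_hs by blast
  have cfst: "continuous_on UNIV (fst :: (complex^'n^'n) \<times> real \<Rightarrow> _)"
    by (rule continuous_on_fst[OF continuous_on_id])
  have csnd: "continuous_on UNIV (snd :: (complex^'n^'n) \<times> real \<Rightarrow> _)"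
    by (rule continuous_on_snd[OF continuous_on_id])
  have cl1: "closed {p :: (complex^'n^'n) \<times> real. \<forall>i. i \<in> L \<longrightarrow> 1 - \<epsilon> \<le> inner (fst p) (P0 i)}"
  proof (rule closed_Collect_all)
    fix i
    show "closed {p :: (complex^'n^'n) \<times> real. i \<in> L \<longrightarrow> 1 - \<epsilon> \<le> inner (fst p) (P0 i)}"
    proof (cases "i \<in> L")
      case True
      then show ?thesis
        by (simp, intro closed_Collect_le continuous_on_const continuous_on_inner cfst)
    qed simp
  qed
  have cl2: "closed {p :: (complex^'n^'n) \<times> real. \<forall>j. j \<in> S \<longrightarrow> inner (fst p) (P1 j) \<le> snd p}"
  proof (rule closed_Collect_all)
    fix j
    show "closed {p :: (complex^'n^'n) \<times> real. j \<in> S \<longrightarrow> inner (fst p) (P1 j) \<le> snd p}"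
    proof (cases "j \<in> S")
      case True
      then show ?thesis
        by (simp, intro closed_Collect_le continuous_on_const continuous_on_inner cfst csnd)
    qed simp
  qed
  have cl3: "closed {p :: (complex^'n^'n) \<times> real. psd (mat 1 - fst p)}"
    by (intro closed_psd continuous_on_diff continuous_on_const cfst)
  have cl4: "closed {p :: (complex^'n^'n) \<times> real. 0 \<le> snd p}"
    by (intro closed_Collect_le continuous_on_const csnd)
  have cl5: "closed {p :: (complex^'n^'n) \<times> real. psd (fst p)}"
    by (intro closed_psd cfst)
  have cl6: "closed {p :: (complex^'n^'n) \<times> real. snd p \<le> \<gamma>1}"
    by (intro closed_Collect_le continuous_on_const csnd)
  have clT: "closed T" unfolding Te
    by (intro closed_Int cl1 cl2 cl3 cl4 cl5 cl6)
  have bT: "bounded T"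
    unfolding bounded_iff
  proof (intro exI ballI)
    fix p assume "p \<in> T"
    then have pf: "primal_feasible \<epsilon> L P0 S P1 (fst p) (snd p)" and g1: "snd p \<le> \<gamma>1"
      unfolding T_def by auto
    have pX: "psd (fst p)" and pI: "psd (mat 1 - fst p)" and g0: "0 \<le> snd p"
      using pf unfolding primal_feasible_def loewner_le_def by auto
    have "0 \<le> inner (fst p) (mat 1 - fst p)" by (rule psd_inner_nonneg[OF pX pI])
    then have "(norm (fst p))^2 \<le> inner (fst p) (mat 1)"
      by (simp add: inner_diff_right power2_norm_eq_inner)
    also have "\<dots> \<le> norm (fst p) * norm (mat 1 :: complex^'n^'n)" by (rule norm_cauchy_schwarz)
    finally have "norm (fst p) \<le> norm (mat 1 :: complex^'n^'n)"
      by (cases "norm (fst p) = 0") (simp_all add: power2_eq_square)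
    moreover have "norm (snd p) \<le> \<gamma>1" using g0 g1 by simp
    moreover have "norm p \<le> norm (fst p) + norm (snd p)"
      using norm_Pair_le[of "fst p" "snd p"] by simp
    ultimately show "norm p \<le> norm (mat 1 :: complex^'n^'n) + \<gamma>1" by linarith
  qed
  have cT: "compact T" using clT bT by (simp add: compact_eq_bounded_closed)
  have neT: "(X1, \<gamma>1) \<in> T" unfolding T_def using feas by simp
  obtain p0 where p0: "p0 \<in> T" and minp: "\<forall>p\<in>T. snd p0 \<le> snd p"
    using continuous_attains_inf[OF cT _ continuous_on_subset[OF csnd subset_UNIV]] neT by blast
  have pf0: "primal_feasible \<epsilon> L P0 S P1 (fst p0) (snd p0)" and le1: "snd p0 \<le> \<gamma>1"
    using p0 unfolding T_def by auto
  have "snd p0 \<le> \<gamma>" if "primal_feasible \<epsilon> L P0 S P1 X \<gamma>" for X \<gamma>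
  proof (cases "\<gamma> \<le> \<gamma>1")
    case True
    then have "(X, \<gamma>) \<in> T" unfolding T_def using that by simp
    then show ?thesis using minp by fastforce
  next
    case False
    then show ?thesis using le1 by simp
  qed
  then show ?thesis using pf0 by blast
qed


theorem lemma2:
  fixes \<epsilon> :: real
    and \<Lambda> :: "'a set" and \<Sigma> :: "'b set"
    and P0 :: "'a \<Rightarrow> complex^'n^'n" and P1 :: "'b \<Rightarrow> complex^'n^'n"
  assumes "0 \<le> \<epsilon>" and "\<epsilon> \<le> 1"
    and "finite \<Lambda>" and "finite \<Sigma>"
    and "\<forall>i\<in>\<Lambda>. psd (P0 i)" and "\<forall>j\<in>\<Sigma>. psd (P1 j)"
  shows "primal_value \<epsilon> \<Lambda> P0 \<Sigma> P1 = dual_value \<epsilon> \<Lambda> P0 \<Sigma> P1 \<and>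
    ((\<exists>X \<gamma>. primal_feasible \<epsilon> \<Lambda> P0 \<Sigma> P1 X \<gamma>) \<longrightarrow>
       (\<exists>X \<gamma>. primal_feasible \<epsilon> \<Lambda> P0 \<Sigma> P1 X \<gamma> \<and>
              ereal \<gamma> = primal_value \<epsilon> \<Lambda> P0 \<Sigma> P1))"
proof -
  note fL = assms(3) and fS = assms(4) and p0 = assms(5) and p1 = assms(6)
  define PV where "PV = primal_value \<epsilon> \<Lambda> P0 \<Sigma> P1"
  define DV where "DV = dual_value \<epsilon> \<Lambda> P0 \<Sigma> P1"
  have DV_upper: "ereal (dual_objective \<epsilon> \<Lambda> z Z) \<le> DV" if "dual_feasible \<Lambda> P0 \<Sigma> P1 z v Z" for z v Z
    unfolding DV_def dual_value_def
    by (rule SUP_upper2[where i="(z, v, Z)"]) (use that in simp_all)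
  have DV_least: "DV \<le> ereal \<gamma>" if "primal_feasible \<epsilon> \<Lambda> P0 \<Sigma> P1 X \<gamma>" for X \<gamma>
    unfolding DV_def dual_value_def
  proof (rule SUP_least)
    fix d assume "d \<in> {(z, v, Z). dual_feasible \<Lambda> P0 \<Sigma> P1 z v Z}"
    then obtain z v Z where d: "d = (z, v, Z)" and df: "dual_feasible \<Lambda> P0 \<Sigma> P1 z v Z" by blast
    show "ereal (dual_objective \<epsilon> \<Lambda> (fst d) (snd (snd d))) \<le> ereal \<gamma>"
      unfolding d using weak_duality[OF fL fS that df] by simp
  qed
  have df0: "dual_feasible \<Lambda> P0 \<Sigma> P1 (\<lambda>i. 0) (\<lambda>j. 0) 0"
    unfolding dual_feasible_def loewner_le_def by (simp add: psd_zero herm_zero)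
  have DV0: "0 \<le> DV"
    using DV_upper[OF df0] by (simp add: dual_objective_def ctrace_def zero_ereal_def)
  have from_bound: "\<exists>X \<gamma>. primal_feasible \<epsilon> \<Lambda> P0 \<Sigma> P1 X \<gamma> \<and> \<gamma> \<le> dd + \<eta>"
    if "DV = ereal dd" "0 < \<eta>" for dd \<eta>
  proof (rule sep[OF fL fS p0 p1])
    fix z v Z assume "dual_feasible \<Lambda> P0 \<Sigma> P1 z v Z"
    from DV_upper[OF this] have "dual_objective \<epsilon> \<Lambda> z Z \<le> dd" using that by simp
    then show "dual_objective \<epsilon> \<Lambda> z Z < dd + \<eta>" using that by simp
  qed
  show ?thesis
  proof (cases "\<exists>X \<gamma>. primal_feasible \<epsilon> \<Lambda> P0 \<Sigma> P1 X \<gamma>")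
    case False
    have PVi: "PV = \<infinity>"
      unfolding PV_def primal_value_def using False by (auto simp: top_ereal_def[symmetric])
    have "DV = \<infinity>"
    proof (rule ccontr)
      assume "DV \<noteq> \<infinity>"
      then obtain dd where "DV = ereal dd" using DV0 by (cases DV) auto
      from from_bound[OF this, of 1] False show False by simp
    qed
    then show ?thesis using PVi False unfolding PV_def DV_def by simp
  next
    case True
    then obtain X1 \<gamma>1 where f1: "primal_feasible \<epsilon> \<Lambda> P0 \<Sigma> P1 X1 \<gamma>1" by blast
    obtain X0 \<gamma>0 where f0: "primal_feasible \<epsilon> \<Lambda> P0 \<Sigma> P1 X0 \<gamma>0"
      and min0: "\<And>X \<gamma>. primal_feasible \<epsilon> \<Lambda> P0 \<Sigma> P1 X \<gamma> \<Longrightarrow> \<gamma>0 \<le> \<gamma>"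
      using attain[OF fL fS f1] by blast
    have PVe: "PV = ereal \<gamma>0"
      unfolding PV_def primal_value_def
    proof (rule antisym)
      show "(INF p\<in>{(X, \<gamma>). primal_feasible \<epsilon> \<Lambda> P0 \<Sigma> P1 X \<gamma>}. ereal (snd p)) \<le> ereal \<gamma>0"
        by (rule INF_lower2[where i="(X0, \<gamma>0)"]) (use f0 in simp_all)
      show "ereal \<gamma>0 \<le> (INF p\<in>{(X, \<gamma>). primal_feasible \<epsilon> \<Lambda> P0 \<Sigma> P1 X \<gamma>}. ereal (snd p))"
        by (rule INF_greatest) (auto intro: min0)
    qed
    have DVle: "DV \<le> ereal \<gamma>0" by (rule DV_least[OF f0])
    then obtain dd where DVd: "DV = ereal dd" using DV0 by (cases DV) auto
    have "\<gamma>0 \<le> dd + \<eta>" if eta: "0 < \<eta>" for \<eta>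
    proof -
      obtain X \<gamma> where "primal_feasible \<epsilon> \<Lambda> P0 \<Sigma> P1 X \<gamma>" "\<gamma> \<le> dd + \<eta>"
        using from_bound[OF DVd eta] by blast
      then show ?thesis using min0 by fastforce
    qed
    then have "\<gamma>0 \<le> dd" by (rule field_le_epsilon)
    moreover have "dd \<le> \<gamma>0" using DVle DVd by simp
    ultimately have "PV = DV" using PVe DVd by simp
    then show ?thesis using f0 PVe unfolding PV_def DV_def by auto
  qed
qed


end
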